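(* Let $F$ be a finite simple graph without isolated vertices, and let $G$ be a $k$-fold cover of $F$. Then $\gamma_t(G) \leq k\,\gamma_t(F)$. Moreover, this bound is tight: for every positive integer $k$ there exist a graph $F$ without isolated vertices and a $k$-fold cover $G$ of $F$ with $\gamma_t(G) = k\,\gamma_t(F)$.
   Context: All graphs are finite, simple and undirected. A graph $G$ is a cover of a graph $F$ if there is an onto map $\pi: V(G)\to V(F)$ such that for every vertex $v$ of $G$, $\pi$ maps the neighbours of $v$ in $G$ bijectively onto the neighbours of $\pi(v)$ in $F$; the cover is $k$-fold if every fibre $\pi^{-1}(u)$ has exactly $k$ vertices. A total dominating set of a graph is a set $S$ of vertices such that every vertex of the graph (including those in $S$) is adjacent to some vertex of $S$; it exists iff the graph has no isolated vertices. $\gamma_t(\cdot)$ denotes the total domination number, the minimum size of a total dominating set. *)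

theory Defs
  imports Main
begin

definition simple_graph :: "'a set \<Rightarrow> ('a \<Rightarrow> 'a \<Rightarrow> bool) \<Rightarrow> bool" where
  "simple_graph V E \<longleftrightarrow> finite V \<and> (\<forall>u v. E u v \<longrightarrow> u \<in> V \<and> v \<in> V)
     \<and> (\<forall>u v. E u v \<longrightarrow> E v u) \<and> (\<forall>v. \<not> E v v)"

definition nbrs :: "'a set \<Rightarrow> ('a \<Rightarrow> 'a \<Rightarrow> bool) \<Rightarrow> 'a \<Rightarrow> 'a set" where
  "nbrs V E v = {u \<in> V. E v u}"

definition no_isolated :: "'a set \<Rightarrow> ('a \<Rightarrow> 'a \<Rightarrow> bool) \<Rightarrow> bool" where
  "no_isolated V E \<longleftrightarrow> (\<forall>v \<in> V. \<exists>u \<in> V. E v u)"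

definition is_cover :: "'b set \<Rightarrow> ('b \<Rightarrow> 'b \<Rightarrow> bool) \<Rightarrow> 'a set \<Rightarrow> ('a \<Rightarrow> 'a \<Rightarrow> bool)
    \<Rightarrow> ('b \<Rightarrow> 'a) \<Rightarrow> bool" where
  "is_cover VG EG VF EF p \<longleftrightarrow> p ` VG = VF \<and>
     (\<forall>v \<in> VG. bij_betw p (nbrs VG EG v) (nbrs VF EF (p v)))"

definition k_fold_cover :: "nat \<Rightarrow> 'b set \<Rightarrow> ('b \<Rightarrow> 'b \<Rightarrow> bool) \<Rightarrow> 'a set
    \<Rightarrow> ('a \<Rightarrow> 'a \<Rightarrow> bool) \<Rightarrow> ('b \<Rightarrow> 'a) \<Rightarrow> bool" where
  "k_fold_cover k VG EG VF EF p \<longleftrightarrow> is_cover VG EG VF EF p \<and>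
     (\<forall>u \<in> VF. card {v \<in> VG. p v = u} = k)"

definition total_dominating_set :: "'a set \<Rightarrow> ('a \<Rightarrow> 'a \<Rightarrow> bool) \<Rightarrow> 'a set \<Rightarrow> bool" where
  "total_dominating_set V E S \<longleftrightarrow> S \<subseteq> V \<and> (\<forall>v \<in> V. \<exists>u \<in> S. E v u)"

definition gamma_t :: "'a set \<Rightarrow> ('a \<Rightarrow> 'a \<Rightarrow> bool) \<Rightarrow> nat" where
  "gamma_t V E = (LEAST n. \<exists>S. total_dominating_set V E S \<and> card S = n)"

end

theory Submission
  imports Defs
begin

lemma gamma_le: "total_dominating_set V E S \<Longrightarrow> gamma_t V E \<le> card S"
  unfolding gamma_t_def by (rule Least_le) blast

lemma gamma_ex: assumes "total_dominating_set V E T"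
  obtains S where "total_dominating_set V E S" "card S = gamma_t V E"
proof -
  have "\<exists>S. total_dominating_set V E S \<and> card S = gamma_t V E"
    unfolding gamma_t_def by (rule LeastI_ex) (use assms in blast)
  then show ?thesis using that by blast
qed

lemma gamma_all:
  assumes "total_dominating_set V E V"
    and "\<forall>v\<in>V. \<exists>w\<in>V. \<forall>u. E w u \<longrightarrow> u = v"
  shows "gamma_t V E = card V"
proof -
  have "S = V" if "total_dominating_set V E S" for S
  proof
    show "S \<subseteq> V" using that unfolding total_dominating_set_def by blast
    show "V \<subseteq> S"
    proof
      fix v assume "v \<in> V"
      then obtain w where "w \<in> V" "\<forall>u. E w u \<longrightarrow> u = v" using assms(2) by blast
      then show "v \<in> S" using that unfolding total_dominating_set_def by blast
    qed
  qed
  note SV = this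
  show ?thesis unfolding gamma_t_def
  proof (rule Least_equality)
    show "\<exists>S. total_dominating_set V E S \<and> card S = card V" using assms(1) by blast
    fix y assume "\<exists>S. total_dominating_set V E S \<and> card S = y"
    then obtain S where "total_dominating_set V E S" "card S = y" by blast
    then show "card V \<le> y" using SV[of S] by simp
  qed
qed

lemma part1:
  assumes "simple_graph VF EF" "no_isolated VF EF" "simple_graph VG EG"
    "k_fold_cover k VG EG VF EF p"
  shows "gamma_t VG EG \<le> k * gamma_t VF EF"
proof -
  have tF: "total_dominating_set VF EF VF"
    using assms(2) unfolding total_dominating_set_def no_isolated_def by blast
  obtain S where S: "total_dominating_set VF EF S" "card S = gamma_t VF EF"
    using gamma_ex[OF tF] by blast
  have finF: "finite VF" and finG: "finite VG"
    using assms(1,3) unfolding simple_graph_def by auto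
  have SV: "S \<subseteq> VF" using S(1) unfolding total_dominating_set_def by blast
  have finS: "finite S" using SV finF finite_subset by blast
  define P where "P = {v \<in> VG. p v \<in> S}"
  have cov: "is_cover VG EG VF EF p" and fib: "\<forall>u \<in> VF. card {v \<in> VG. p v = u} = k"
    using assms(4) unfolding k_fold_cover_def by auto
  have "total_dominating_set VG EG P"
    unfolding total_dominating_set_def
  proof (intro conjI ballI)
    show "P \<subseteq> VG" unfolding P_def by blast
    fix v assume v: "v \<in> VG"
    have pv: "p v \<in> VF" using cov v unfolding is_cover_def by blast
    obtain u where u: "u \<in> S" "EF (p v) u" using S(1) pv unfolding total_dominating_set_def by blast
    have "u \<in> nbrs VF EF (p v)" using u SV unfolding nbrs_def by blast
    moreover have "bij_betw p (nbrs VG EG v) (nbrs VF EF (p v))"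
      using cov v unfolding is_cover_def by blast
    ultimately have "u \<in> p ` nbrs VG EG v" using bij_betw_imp_surj_on by metis
    then obtain w where "w \<in> nbrs VG EG v" "p w = u" by blast
    then show "\<exists>w\<in>P. EG v w" using u unfolding P_def nbrs_def by blast
  qed
  then have "gamma_t VG EG \<le> card P" by (rule gamma_le)
  also have "P = (\<Union>u\<in>S. {v \<in> VG. p v = u})" unfolding P_def by blast
  also have "card \<dots> = (\<Sum>u\<in>S. card {v \<in> VG. p v = u})"
    by (rule card_UN_disjoint) (use finS finG in auto)
  also have "\<dots> = (\<Sum>u\<in>S. k)" using fib SV by (intro sum.cong) auto
  also have "\<dots> = k * gamma_t VF EF" using S(2) by simp
  finally show ?thesis .
qed

definition "partner (v::nat) = (if even v then v + 1 else v - 1)"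
definition "EGx (k::nat) u v \<longleftrightarrow> u < 2*k \<and> v = partner u"
definition "EFx (u::nat) v \<longleftrightarrow> u < 2 \<and> v < 2 \<and> u \<noteq> v"

lemma EGx_iff: "v < 2*k \<Longrightarrow> EGx k v u \<longleftrightarrow> u = partner v"
  unfolding EGx_def by simp

lemma partner_lt: "v < 2*k \<Longrightarrow> partner v < 2*k"
  unfolding partner_def by (cases "even v") (auto elim!: evenE oddE)

lemma partner_mod: "partner v mod 2 = 1 - v mod 2"
  unfolding partner_def by (cases "even v") (auto elim!: evenE oddE)

lemma partner_partner: "partner (partner v) = v"
  unfolding partner_def by (cases "even v") (auto elim!: evenE oddE)

lemma partner_neq: "partner v \<noteq> v"
  unfolding partner_def by (cases "even v") (auto elim!: evenE oddE)

lemma nbrsG: "v < 2*k \<Longrightarrow> nbrs {..<2*k} (EGx k) v = {partner v}"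
  unfolding nbrs_def using EGx_iff partner_lt by auto

lemma nbrsF: "u < 2 \<Longrightarrow> nbrs {0,1} EFx u = {1 - u}"
  unfolding nbrs_def EFx_def by (auto; arith)

lemma fibre: assumes "u < (2::nat)" shows "card {v \<in> {..<2*k}. v mod 2 = u} = k"
proof -
  have "{v \<in> {..<2*k}. v mod 2 = u} = (\<lambda>i. 2*i+u) ` {..<k}"
  proof
    show "{v \<in> {..<2*k}. v mod 2 = u} \<subseteq> (\<lambda>i. 2*i+u) ` {..<k}"
    proof
      fix v assume "v \<in> {v \<in> {..<2*k}. v mod 2 = u}"
      then have "v < 2*k" "v mod 2 = u" by auto
      then have "v = 2*(v div 2)+u" "v div 2 < k" by presburger+
      then show "v \<in> (\<lambda>i. 2*i+u) ` {..<k}" by blast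
    qed
    show "(\<lambda>i. 2*i+u) ` {..<k} \<subseteq> {v \<in> {..<2*k}. v mod 2 = u}"
      using assms by auto
  qed
  moreover have "inj_on (\<lambda>i. 2*i+u) {..<k}" by (auto simp: inj_on_def)
  ultimately show ?thesis by (simp add: card_image)
qed

lemma part2:
  assumes "k > (0::nat)"
  shows "\<exists>(VF' :: nat set) EF' (VG' :: nat set) EG' p'.
               VF' \<noteq> {} \<and> simple_graph VF' EF' \<and> no_isolated VF' EF'
               \<and> simple_graph VG' EG' \<and> k_fold_cover k VG' EG' VF' EF' p'
               \<and> gamma_t VG' EG' = k * gamma_t VF' EF'"
proof (intro exI conjI)
  show "{0::nat,1} \<noteq> {}" by simp
  show "simple_graph {0::nat,1} EFx" unfolding simple_graph_def EFx_def by auto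
  show "no_isolated {0::nat,1} EFx" unfolding no_isolated_def EFx_def by auto
  show "simple_graph {..<2*k} (EGx k)" unfolding simple_graph_def EGx_def
    using partner_lt partner_partner partner_neq by (auto; metis)
  show "k_fold_cover k {..<2*k} (EGx k) {0,1} EFx (\<lambda>v. v mod 2)"
    unfolding k_fold_cover_def is_cover_def
  proof (intro conjI ballI)
    have "(0::nat) \<in> (\<lambda>v. v mod 2) ` {..<2*k}" using assms by (intro image_eqI[of _ _ 0]) auto
    moreover have "(1::nat) \<in> (\<lambda>v. v mod 2) ` {..<2*k}" using assms by (intro image_eqI[of _ _ 1]) auto
    ultimately show "(\<lambda>v. v mod 2) ` {..<2*k} = {0::nat,1}" by auto
    fix v assume v: "v \<in> {..<2*k}"
    have "v mod 2 < 2" by simp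
    then show "bij_betw (\<lambda>v. v mod 2) (nbrs {..<2*k} (EGx k) v) (nbrs {0,1} EFx (v mod 2))"
      using v nbrsG[of v k] nbrsF[of "v mod 2"] partner_mod[of v] by (simp add: bij_betw_def)
  next
    fix u :: nat assume "u \<in> {0,1}"
    then show "card {v \<in> {..<2*k}. v mod 2 = u} = k" using fibre[of u k] by auto
  qed
  have gF: "gamma_t {0::nat,1} EFx = 2"
  proof -
    have "gamma_t {0::nat,1} EFx = card {0::nat,1}"
      by (rule gamma_all) (auto simp: total_dominating_set_def EFx_def)
    then show ?thesis by simp
  qed
  have gG: "gamma_t {..<2*k} (EGx k) = 2*k"
  proof -
    have "gamma_t {..<2*k} (EGx k) = card {..<2*k}"
    proof (rule gamma_all)
      show "total_dominating_set {..<2*k} (EGx k) {..<2*k}"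
        unfolding total_dominating_set_def using EGx_iff partner_lt by auto
      show "\<forall>v\<in>{..<2*k}. \<exists>w\<in>{..<2*k}. \<forall>u. EGx k w u \<longrightarrow> u = v"
      proof
        fix v assume v: "v \<in> {..<2*k}"
        then have "partner v \<in> {..<2*k}" using partner_lt by auto
        moreover have "\<forall>u. EGx k (partner v) u \<longrightarrow> u = v"
          using EGx_iff[of "partner v" k] partner_lt v partner_partner by auto
        ultimately show "\<exists>w\<in>{..<2*k}. \<forall>u. EGx k w u \<longrightarrow> u = v" by blast
      qed
    qed
    then show ?thesis by simp
  qed
  show "gamma_t {..<2*k} (EGx k) = k * gamma_t {0::nat,1} EFx" using gF gG by simp
qed

theorem theorem2p9:
  fixes VF :: "'a set" and EF :: "'a \<Rightarrow> 'a \<Rightarrow> bool"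
    and VG :: "'b set" and EG :: "'b \<Rightarrow> 'b \<Rightarrow> bool"
    and p :: "'b \<Rightarrow> 'a" and k :: nat
  shows "(simple_graph VF EF \<and> no_isolated VF EF \<and> simple_graph VG EG
            \<and> k_fold_cover k VG EG VF EF p
          \<longrightarrow> gamma_t VG EG \<le> k * gamma_t VF EF)
       \<and> (\<forall>k::nat. k > 0 \<longrightarrow>
            (\<exists>(VF' :: nat set) EF' (VG' :: nat set) EG' p'.
               VF' \<noteq> {} \<and> simple_graph VF' EF' \<and> no_isolated VF' EF'
               \<and> simple_graph VG' EG' \<and> k_fold_cover k VG' EG' VF' EF' p'
               \<and> gamma_t VG' EG' = k * gamma_t VF' EF'))"
proof (rule conjI)
  show "simple_graph VF EF \<and> no_isolated VF EF \<and> simple_graph VG EG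
            \<and> k_fold_cover k VG EG VF EF p
          \<longrightarrow> gamma_t VG EG \<le> k * gamma_t VF EF"
  proof (intro impI)
    assume h: "simple_graph VF EF \<and> no_isolated VF EF \<and> simple_graph VG EG
            \<and> k_fold_cover k VG EG VF EF p"
    show "gamma_t VG EG \<le> k * gamma_t VF EF"
      using h by (intro part1[of VF EF VG EG k p]) simp_all
  qed
next
  show "\<forall>k::nat. k > 0 \<longrightarrow>
            (\<exists>(VF' :: nat set) EF' (VG' :: nat set) EG' p'.
               VF' \<noteq> {} \<and> simple_graph VF' EF' \<and> no_isolated VF' EF'
               \<and> simple_graph VG' EG' \<and> k_fold_cover k VG' EG' VF' EF' p'
               \<and> gamma_t VG' EG' = k * gamma_t VF' EF')"
    by (intro allI impI part2)
qed

end
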